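(* For integers $n\ge 0$ and $k\ge 1$, $$\mathfrak C_{2n}^{(k)}=(-4)^n(n!)^2\int_0^1\cdots\int_0^1\binom{\frac{x_1x_2\cdots x_k}{2}}{n}\binom{-\frac{x_1x_2\cdots x_k}{2}}{n}\,dx_1\,dx_2\cdots dx_k,$$ where the integral is $k$-fold.
   Context: For an integer $k$, ${\rm Lif}_{2,k}(z)=\sum_{m=0}^\infty\frac{z^{2m}}{(2m)!(2m+1)^k}$, and the poly-Cauchy numbers with level $2$, $\mathfrak C_n^{(k)}$, are defined by ${\rm Lif}_{2,k}({\rm arcsinh}\,t)=\sum_{n=0}^\infty\mathfrak C_n^{(k)}\frac{t^n}{n!}$. For real $y$, $\binom{y}{n}=\frac{y(y-1)\cdots(y-n+1)}{n!}$. *)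

theory Defs
  imports "HOL-Analysis.Analysis"
begin

definition Lif2 :: "int \<Rightarrow> real \<Rightarrow> real" where
  "Lif2 k z = (\<Sum>m. z ^ (2*m) / (fact (2*m) * (of_nat (2*m+1)) powi k))"

text \<open>Poly-Cauchy numbers with level 2: the coefficients of the exponential
  generating function Lif_{2,k}(arcsinh t) = sum_n C_n t^n / n!, i.e. the unique
  sequence whose exponential power series represents this function near 0.\<close>
definition polyCauchy2 :: "int \<Rightarrow> nat \<Rightarrow> real" where
  "polyCauchy2 k = (THE c. \<exists>r>0. \<forall>t::real. \<bar>t\<bar> < r \<longrightarrow>
      (\<lambda>n. c n * t ^ n / fact n) sums Lif2 k (arsinh t))"

end

theory Submission
  imports Defs "HOL-Probability.Probability"
begin

definition aa :: "real \<Rightarrow> nat \<Rightarrow> real" where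
  "aa y n = (\<Prod>j<n. y^2 - 4 * (real j)^2)"

definition cf :: "real \<Rightarrow> nat \<Rightarrow> real" where
  "cf y m = (if even m then aa y (m div 2) / fact m else 0)"

lemma aa_Suc: "aa y (Suc n) = aa y n * (y^2 - 4 * (real n)^2)"
  by (simp add: aa_def)

lemma aa_bound: assumes "\<bar>y\<bar> \<le> 1" shows "\<bar>aa y n\<bar> \<le> fact (2*n)"
proof (induction n)
  case 0 then show ?case by (simp add: aa_def)
next
  case (Suc n)
  have y2: "y^2 \<le> 1" using assms by (simp add: abs_square_le_1)
  have "\<bar>y^2 - 4 * (real n)^2\<bar> \<le> 1 + 4 * (real n)^2"
    using y2 zero_le_power2[of y] zero_le_power2[of "real n"] unfolding abs_le_iff by linarith
  also have "... \<le> (2*real n+1)*(2*real n+2)"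
    by (simp add: algebra_simps power2_eq_square)
  finally have "\<bar>y^2 - 4 * (real n)^2\<bar> \<le> (2*real n+1)*(2*real n+2)" .
  moreover have "fact (2 * Suc n) = (fact (2*n) :: real) * ((2*real n+1)*(2*real n+2))"
    by (simp add: algebra_simps)
  ultimately show ?case using Suc
    by (simp only: aa_Suc abs_mult) (intro mult_mono; simp)
qed

lemma cf_bound: assumes "\<bar>y\<bar> \<le> 1" shows "\<bar>cf y m\<bar> \<le> 1"
proof (cases "even m")
  case True
  then obtain j where m: "m = 2*j" by blast
  have f: "(fact (2*j)::real) > 0" by simp
  have "cf y m = aa y j / fact (2*j)" by (simp add: cf_def m)
  then have "\<bar>cf y m\<bar> = \<bar>aa y j\<bar> / fact (2*j)" by (simp add: abs_divide)
  then show ?thesis using aa_bound[OF assms, of j] f by (simp add: divide_le_eq_1_pos)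
qed (simp add: cf_def)

lemma cf_rec: "(real m+1)*(real m+2) * cf y (m+2) = (y^2 - (real m)^2) * cf y m"
proof (cases "even m")
  case True
  then obtain j where m: "m = 2*j" by blast
  define F where "F = (2*real j+1)*(2*real j+2)"
  have F: "F > 0" by (simp add: F_def)
  have fj: "fact (2*j+2) = (fact (2*j) :: real) * F"
    by (simp add: algebra_simps F_def)
  have "cf y (m+2) = aa y (Suc j) / fact (2*j+2)"
    by (simp add: cf_def m)
  also have "... = aa y j * (y^2 - 4 * (real j)^2) / (fact (2*j) * F)"
    by (simp only: aa_Suc fj)
  finally have 1: "cf y (m+2) = aa y j * (y^2 - 4 * (real j)^2) / (fact (2*j) * F)" .
  have 2: "cf y m = aa y j / fact (2*j)" by (simp add: cf_def m)
  have 3: "(real m+1)*(real m+2) = F" by (simp add: F_def m)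
  show ?thesis unfolding 1 2 3 using F
    by (simp add: m field_simps power2_eq_square)
qed (simp add: cf_def)

lemma cf_summable: assumes "\<bar>y\<bar> \<le> 1" "\<bar>s\<bar> < 1" shows "summable (\<lambda>m. cf y m * s^m)"
proof (rule summable_comparison_test)
  show "\<exists>N. \<forall>n\<ge>N. norm (cf y n * s^n) \<le> \<bar>s\<bar>^n"
    using cf_bound[OF assms(1)]
    by (auto simp: abs_mult power_abs intro!: exI[of _ 0] mult_left_le_one_le)
  show "summable (\<lambda>n. \<bar>s\<bar>^n)" using assms by simp
qed


definition P0 :: "real \<Rightarrow> real \<Rightarrow> real" where "P0 y s = (\<Sum>m. cf y m * s^m)"
definition P1 :: "real \<Rightarrow> real \<Rightarrow> real" where "P1 y s = (\<Sum>m. diffs (cf y) m * s^m)"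
definition P2 :: "real \<Rightarrow> real \<Rightarrow> real" where "P2 y s = (\<Sum>m. diffs (diffs (cf y)) m * s^m)"

lemma cf1_summable: assumes "\<bar>y\<bar> \<le> 1" "\<bar>s\<bar> < 1" shows "summable (\<lambda>m. diffs (cf y) m * s^m)"
  using assms by (intro termdiff_converges[of s 1]) (auto intro: cf_summable)

lemma cf2_summable: assumes "\<bar>y\<bar> \<le> 1" "\<bar>s\<bar> < 1" shows "summable (\<lambda>m. diffs (diffs (cf y)) m * s^m)"
  using assms by (intro termdiff_converges[of s 1]) (auto intro: cf1_summable)

lemma P0_deriv: assumes "\<bar>y\<bar> \<le> 1" "\<bar>s\<bar> < 1" shows "DERIV (P0 y) s :> P1 y s"
  unfolding P0_def[abs_def] P1_def
  using assms by (intro termdiffs_strong'[of 1]) (auto intro: cf_summable)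

lemma P1_deriv: assumes "\<bar>y\<bar> \<le> 1" "\<bar>s\<bar> < 1" shows "DERIV (P1 y) s :> P2 y s"
  unfolding P1_def[abs_def] P2_def
  using assms by (intro termdiffs_strong'[of 1]) (auto intro: cf1_summable)

lemma ode: assumes "\<bar>y\<bar> \<le> 1" "\<bar>s\<bar> < 1"
  shows "(1 + s^2) * P2 y s + s * P1 y s = y^2 * P0 y s"
proof -
  define c where "c = cf y"
  have S0: "(\<lambda>n. c n * s^n) sums P0 y s"
    unfolding P0_def c_def using cf_summable[OF assms] by (rule summable_sums)
  have S1: "(\<lambda>n. diffs c n * s^n) sums P1 y s"
    unfolding P1_def c_def using cf1_summable[OF assms] by (rule summable_sums)
  have S2: "(\<lambda>n. diffs (diffs c) n * s^n) sums P2 y s"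
    unfolding P2_def c_def using cf2_summable[OF assms] by (rule summable_sums)
  define f where "f m = real m * c m * s^m" for m
  define g where "g m = (real m - 1) * real m * c m * s^m" for m
  have "(\<lambda>n. s * (diffs c n * s^n)) sums (s * P1 y s)" by (rule sums_mult[OF S1])
  moreover have "(\<lambda>n. s * (diffs c n * s^n)) = (\<lambda>n. f (Suc n))"
    by (auto simp: f_def diffs_def)
  ultimately have F: "f sums (s * P1 y s)" using sums_Suc_iff[of f] by (simp add: f_def)
  have "(\<lambda>n. (s * s) * (diffs (diffs c) n * s^n)) sums ((s * s) * P2 y s)" by (rule sums_mult[OF S2])
  moreover have "(\<lambda>n. (s * s) * (diffs (diffs c) n * s^n)) = (\<lambda>n. g (Suc (Suc n)))"
    by (auto simp: g_def diffs_def algebra_simps)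
  ultimately have "(\<lambda>n. g (Suc n)) sums ((s * s) * P2 y s)" using sums_Suc_iff[of "\<lambda>n. g (Suc n)"]
    by (simp add: g_def)
  then have G: "g sums ((s * s) * P2 y s)" using sums_Suc_iff[of g] by (simp add: g_def)
  have "(\<lambda>n. diffs (diffs c) n * s^n + g n + f n - y^2 * (c n * s^n)) sums
      (P2 y s + (s * s) * P2 y s + s * P1 y s - y^2 * P0 y s)"
    by (intro sums_add sums_diff S2 G F sums_mult S0)
  moreover have "(\<lambda>n. diffs (diffs c) n * s^n + g n + f n - y^2 * (c n * s^n)) = (\<lambda>n. 0)"
  proof
    fix n
    have r: "(real n+1)*(real n+2) * c (n+2) = (y^2 - (real n)^2) * c n"
      unfolding c_def by (rule cf_rec)
    have "diffs (diffs c) n = (real n+1)*(real n+2) * c (n+2)"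
      by (simp add: diffs_def algebra_simps)
    then have e: "diffs (diffs c) n * s^n = (y^2 - (real n)^2) * c n * s^n" using r by simp
    show "diffs (diffs c) n * s^n + g n + f n - y^2 * (c n * s^n) = 0"
      unfolding f_def g_def e by (simp add: algebra_simps power2_eq_square)
  qed
  ultimately have "(\<lambda>n. 0) sums (P2 y s + (s * s) * P2 y s + s * P1 y s - y^2 * P0 y s)"
    by simp
  from sums_unique2[OF this sums_zero]
  have "(P2 y s + (s * s) * P2 y s + s * P1 y s - y^2 * P0 y s) = 0" .
  then show ?thesis by (simp add: algebra_simps power2_eq_square)
qed


lemma P0_0: "P0 y 0 = 1"
  unfolding P0_def using powser_zero[of "cf y"] by (simp add: cf_def aa_def)

lemma P1_0: "P1 y 0 = 0"
  unfolding P1_def using powser_zero[of "diffs (cf y)"] by (simp add: cf_def diffs_def)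

lemma P0_cosh: assumes y: "\<bar>y\<bar> \<le> 1" and t: "\<bar>t\<bar> < 1/2"
  shows "P0 y t = cosh (y * arsinh t)"
proof -
  define \<rho> where "\<rho> = arsinh (1/2::real)"
  have rho: "\<rho> > 0" by (simp add: \<rho>_def)
  have sh: "\<bar>sinh u\<bar> < 1/2" if "u \<in> {-\<rho><..<\<rho>}" for u
  proof -
    have "arsinh (sinh u) < arsinh (1/2)"
      using that by (simp add: arsinh_sinh_real \<rho>_def)
    then have 1: "sinh u < 1/2" by (simp only: arsinh_less_iff_real)
    have "arsinh (-(1/2::real)) < arsinh (sinh u)"
      unfolding arsinh_minus_real arsinh_sinh_real using that by (simp add: \<rho>_def)
    then have 2: "-(1/2) < sinh u" by (simp only: arsinh_less_iff_real)
    from 1 2 show ?thesis by linarith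
  qed
  have dlin: "DERIV (\<lambda>u. y*u) u :> y" for u
    using DERIV_cmult[OF DERIV_ident, of y] by simp
  have dlinm: "DERIV (\<lambda>u. -(y*u)) u :> -y" for u
    using DERIV_minus[OF dlin] by simp
  have dsinh: "DERIV sinh u :> cosh u" for u :: real
    using has_field_derivative_sinh[OF DERIV_ident] by simp
  have dcosh: "DERIV cosh u :> sinh u" for u :: real
    using has_field_derivative_cosh[OF DERIV_ident] by simp
  have dcoshy: "DERIV (\<lambda>u. cosh (y*u)) u :> sinh (y*u) * y" for u
    by (rule has_field_derivative_cosh[OF dlin])
  have dsinhy: "DERIV (\<lambda>u. sinh (y*u)) u :> cosh (y*u) * y" for u
    by (rule has_field_derivative_sinh[OF dlin])
  have dexp: "DERIV (\<lambda>u. exp (y*u)) u :> exp (y*u) * y" for u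
    by (rule DERIV_chain2[OF DERIV_exp dlin])
  have dexpm: "DERIV (\<lambda>u. exp (-(y*u))) u :> exp (-(y*u)) * (-y)" for u
    by (rule DERIV_chain2[OF DERIV_exp dlinm])
  define W where "W u = P0 y (sinh u) - cosh (y * u)" for u
  define W1 where "W1 u = P1 y (sinh u) * cosh u - y * sinh (y * u)" for u
  have dW: "DERIV W u :> W1 u" if "u \<in> {-\<rho><..<\<rho>}" for u
  proof -
    have s1: "\<bar>sinh u\<bar> < 1" using sh[OF that] by simp
    have "DERIV (\<lambda>u. P0 y (sinh u)) u :> P1 y (sinh u) * cosh u"
      by (rule DERIV_chain2[OF P0_deriv[OF y s1] dsinh])
    from DERIV_diff[OF this dcoshy] show ?thesis
      unfolding W_def[abs_def] W1_def by (rule DERIV_cong) simp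
  qed
  have dW1: "DERIV W1 u :> y^2 * W u" if "u \<in> {-\<rho><..<\<rho>}" for u
  proof -
    have s1: "\<bar>sinh u\<bar> < 1" using sh[OF that] by simp
    have "DERIV (\<lambda>u. P1 y (sinh u)) u :> P2 y (sinh u) * cosh u"
      by (rule DERIV_chain2[OF P1_deriv[OF y s1] dsinh])
    from DERIV_mult'[OF this dcosh] 
    have "DERIV (\<lambda>u. P1 y (sinh u) * cosh u) u :> P1 y (sinh u) * sinh u + P2 y (sinh u) * cosh u * cosh u" .
    from DERIV_diff[OF this DERIV_cmult[OF dsinhy, of y]]
    have "DERIV W1 u :> P1 y (sinh u) * sinh u + P2 y (sinh u) * cosh u * cosh u
        - y * (cosh (y * u) * y)"
      unfolding W1_def[abs_def] .
    moreover have "P1 y (sinh u) * sinh u + P2 y (sinh u) * cosh u * cosh u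
        - y * (cosh (y * u) * y) = y^2 * W u"
    proof -
      have cc: "cosh u * cosh u = 1 + (sinh u)^2" using cosh_square_eq[of u]
        by (simp add: power2_eq_square)
      have p2: "P2 y (sinh u) * cosh u * cosh u = P2 y (sinh u) * (1 + (sinh u)^2)"
        by (simp only: mult.assoc cc)
      have "P1 y (sinh u) * sinh u + P2 y (sinh u) * cosh u * cosh u
          = (1 + (sinh u)^2) * P2 y (sinh u) + sinh u * P1 y (sinh u)"
        unfolding p2 by (simp only: mult.commute add.commute)
      also have "... = y^2 * P0 y (sinh u)" by (rule ode[OF y s1])
      finally show ?thesis unfolding W_def by (simp add: right_diff_distrib power2_eq_square)
    qed
    ultimately show ?thesis by simp
  qed
  define A where "A u = (W1 u - y * W u) * exp (y * u)" for u
  have "A u = A 0" if "u \<in> {-\<rho><..<\<rho>}" for u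
  proof (rule DERIV_isconst3[of "-\<rho>" \<rho> u 0 A])
    fix x assume x: "x \<in> {-\<rho><..<\<rho>}"
    have "DERIV (\<lambda>u. W1 u - y * W u) x :> y^2 * W x - y * W1 x"
      by (rule DERIV_diff[OF dW1[OF x] DERIV_cmult[OF dW[OF x]]])
    from DERIV_mult'[OF this dexp]
    have "DERIV A x :> (W1 x - y * W x) * (exp (y * x) * y) + (y^2 * W x - y * W1 x) * exp (y * x)"
      unfolding A_def[abs_def] .
    then show "DERIV A x :> 0" by (rule DERIV_cong) (simp add: algebra_simps power2_eq_square)
  qed (use rho that in auto)
  moreover have "A 0 = 0" by (simp add: A_def W_def W1_def P0_0 P1_0)
  ultimately have WW: "W1 u = y * W u" if "u \<in> {-\<rho><..<\<rho>}" for u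
    using that by (auto simp: A_def)
  define B where "B u = W u * exp (- (y * u))" for u
  have "B u = B 0" if "u \<in> {-\<rho><..<\<rho>}" for u
  proof (rule DERIV_isconst3[of "-\<rho>" \<rho> u 0 B])
    fix x assume x: "x \<in> {-\<rho><..<\<rho>}"
    from DERIV_mult'[OF dW[OF x] dexpm]
    have "DERIV B x :> W x * (exp (- (y * x)) * (- y)) + W1 x * exp (- (y * x))"
      unfolding B_def[abs_def] .
    then show "DERIV B x :> 0" by (rule DERIV_cong) (simp add: WW[OF x] algebra_simps)
  qed (use rho that in auto)
  moreover have "B 0 = 0" by (simp add: B_def W_def P0_0)
  ultimately have W0: "W u = 0" if "u \<in> {-\<rho><..<\<rho>}" for u
    using that by (auto simp: B_def)
  have t1: "-(1/2) < t" "t < 1/2" using t by (auto simp: abs_less_iff)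
  have "arsinh (-(1/2)) < arsinh t" using t1(1) by (simp only: arsinh_less_iff_real)
  moreover have "arsinh t < arsinh (1/2)" using t1(2) by (simp only: arsinh_less_iff_real)
  ultimately have "arsinh t \<in> {-\<rho><..<\<rho>}" unfolding \<rho>_def arsinh_minus_real by simp
  from W0[OF this] show ?thesis by (simp add: W_def)
qed

lemma even_reindex:
  assumes "\<And>m. odd m \<Longrightarrow> f m = 0"
  shows "(\<lambda>n. f (2*n)) sums s \<longleftrightarrow> f sums s"
proof (rule sums_mono_reindex)
  show "strict_mono (\<lambda>n::nat. 2*n)" by (auto simp: strict_mono_def)
  show "f n = 0" if "n \<notin> range (\<lambda>n::nat. 2*n)" for n
    using that assms by (metis dvdE rangeI)
qed

lemma aa_sums: assumes "\<bar>y\<bar> \<le> 1" "\<bar>t\<bar> < 1/2"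
  shows "(\<lambda>n. aa y n * t^(2*n) / fact (2*n)) sums cosh (y * arsinh t)"
proof -
  have "(\<lambda>m. cf y m * t^m) sums P0 y t"
    unfolding P0_def using assms by (intro summable_sums cf_summable) auto
  then have "(\<lambda>n. cf y (2*n) * t^(2*n)) sums P0 y t"
    by (subst even_reindex) (auto simp: cf_def)
  then show ?thesis using P0_cosh[OF assms] by (simp add: cf_def)
qed

lemma cosh_sums: "(\<lambda>n. x^(2*n) / fact (2*n)) sums cosh (x::real)"
proof -
  have "(\<lambda>n. (\<lambda>m. if even m then x^m /\<^sub>R fact m else 0) (2*n)) sums cosh x"
    by (subst even_reindex) (auto intro: cosh_converges)
  then show ?thesis by (simp add: divide_inverse_commute)
qed

lemma powser_unique:
  fixes c d :: "nat \<Rightarrow> real"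
  assumes r: "r > 0"
    and c: "\<And>t. \<bar>t\<bar> < r \<Longrightarrow> (\<lambda>m. c m * t^m / fact m) sums L t"
    and d: "\<And>t. \<bar>t\<bar> < r \<Longrightarrow> (\<lambda>m. d m * t^m / fact m) sums L t"
  shows "c = d"
proof -
  define e where "e m = (c m - d m) / fact m" for m
  have S: "(\<lambda>m. e m * t^m) sums 0" if "\<bar>t\<bar> < r" for t
  proof -
    have "(\<lambda>m. c m * t^m / fact m - d m * t^m / fact m) sums (L t - L t)"
      by (intro sums_diff c d that)
    then show ?thesis by (simp add: e_def diff_divide_distrib left_diff_distrib)
  qed
  have "e m = 0" for m
  proof (induction m rule: less_induct)
    case (less m)
    define h where "h j = e (j + m)" for j
    have Sh: "(\<lambda>j. h j * t^j) sums 0" if t: "\<bar>t\<bar> < r" "t \<noteq> 0" for t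
    proof -
      have "(\<lambda>j. e (j + m) * t^(j+m)) sums (0 - (\<Sum>i<m. e i * t^i))"
        using S[OF t(1)] by (subst sums_iff_shift) simp
      also have "(\<Sum>i<m. e i * t^i) = 0" using less by simp
      finally have "(\<lambda>j. (h j * t^j) * t^m) sums 0" by (simp add: h_def power_add algebra_simps)
      then have "(\<lambda>j. (h j * t^j) * t^m / t^m) sums (0 / t^m)" by (rule sums_divide)
      then show ?thesis using t by simp
    qed
    have sumK: "summable (\<lambda>j. h j * (r/2)^j)" using Sh[of "r/2"] r by (auto simp: sums_iff)
    define H where "H x = (\<Sum>j. h j * x^j)" for x
    have "isCont H 0" unfolding H_def[abs_def] using sumK r by (intro isCont_powser) auto
    then have l1: "H \<midarrow>0\<rightarrow> H 0" by (simp add: isCont_def)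
    have ev: "eventually (\<lambda>x. H x = 0) (at (0::real))"
      unfolding eventually_at using r
      by (intro exI[of _ r]) (auto simp: H_def dist_real_def intro!: sums_unique[symmetric] Sh)
    have l2: "H \<midarrow>0\<rightarrow> 0"
      by (rule tendsto_eventually[OF ev])
    have "H 0 = 0" using tendsto_unique[OF _ l1 l2] by simp
    moreover have "H 0 = e m" unfolding H_def using powser_zero[of h] by (simp add: h_def)
    ultimately show ?case by simp
  qed
  then show ?thesis by (auto simp: e_def fun_eq_iff)
qed


lemma sums_integral_bounded:
  fixes f :: "nat \<Rightarrow> 'a \<Rightarrow> real"
  assumes P: "prob_space M" and meas: "\<And>n. f n \<in> borel_measurable M"
    and bd: "\<And>n x. x \<in> space M \<Longrightarrow> \<bar>f n x\<bar> \<le> b n" and sb: "summable b"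
  shows "(\<lambda>n. \<integral>x. f n x \<partial>M) sums (\<integral>x. (\<Sum>n. f n x) \<partial>M)"
proof -
  interpret prob_space M by (rule P)
  have int: "integrable M (f n)" for n
    by (rule integrable_const_bound[where B="b n"]) (auto intro!: AE_I2 bd meas)
  show ?thesis
  proof (rule sums_integral)
    show "integrable M (f i)" for i by (rule int)
    show "AE x in M. summable (\<lambda>i. norm (f i x))"
      by (intro AE_I2 summable_comparison_test[OF _ sb]) (auto intro!: exI[of _ 0] bd)
    show "summable (\<lambda>i. \<integral>x. norm (f i x) \<partial>M)"
    proof (rule summable_comparison_test[OF _ sb], intro exI[of _ 0] allI impI)
      fix n :: nat
      have "(\<integral>x. norm (f n x) \<partial>M) \<le> (\<integral>x. b n \<partial>M)"
        by (intro integral_mono) (auto intro: int bd)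
      also have "... = b n" by (simp add: prob_space)
      finally show "norm (\<integral>x. norm (f n x) \<partial>M) \<le> b n" by simp
    qed
  qed
qed

lemma prob_unit: "prob_space (restrict_space lborel {0..1::real})"
proof (rule prob_spaceI)
  show "emeasure (restrict_space lborel {0..1::real}) (space (restrict_space lborel {0..1::real})) = 1"
    by (simp add: space_restrict_space emeasure_restrict_space)
qed

lemma prob_cube: "prob_space (Pi\<^sub>M {..<k} (\<lambda>_. restrict_space lborel {0..1::real}))"
  by (intro prob_space_PiM prob_unit)

lemma space_cube: assumes "x \<in> space (Pi\<^sub>M {..<k} (\<lambda>_. restrict_space lborel {0..1::real}))"
  shows "(\<Prod>i<k. x i) \<in> {0..1}"
proof -
  have "x i \<in> {0..1}" if "i < k" for i
    using assms that by (auto simp: space_PiM space_restrict_space PiE_def Pi_def)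
  then show ?thesis by (auto intro!: prod_nonneg prod_le_1)
qed

lemma meas_X: "(\<lambda>x. \<Prod>i<k. x i) \<in> borel_measurable (Pi\<^sub>M {..<k} (\<lambda>_. restrict_space lborel {0..1::real}))"
proof (rule borel_measurable_prod)
  fix i assume i: "i \<in> {..<k}"
  have id: "(\<lambda>x. x) \<in> borel_measurable (restrict_space lborel {0..1::real})"
    by (intro measurable_restrict_space1) simp
  show "(\<lambda>x. x i) \<in> borel_measurable (Pi\<^sub>M {..<k} (\<lambda>_. restrict_space lborel {0..1::real}))"
    using measurable_compose[OF measurable_component_singleton[OF i] id] .
qed

lemma int_pow: "(\<integral>x. x^j \<partial>restrict_space lborel {0..1::real}) = 1 / (real j + 1)"
proof -
  have "(\<integral>x. x^j \<partial>restrict_space lborel {0..1::real}) = (\<integral>x. x^j * indicator {0..1} x \<partial>lborel)"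
    by (subst integral_restrict_space) (auto simp: mult.commute)
  also have "... = 1 / (real j + 1)" by (subst integral_power) auto
  finally show ?thesis .
qed

lemma int_Xpow: "(\<integral>x. (\<Prod>i<k. x i)^j \<partial>(Pi\<^sub>M {..<k} (\<lambda>_. restrict_space lborel {0..1::real})))
   = (1 / (real j + 1))^k"
proof -
  interpret product_sigma_finite "\<lambda>_. restrict_space lborel {0..1::real}"
    unfolding product_sigma_finite_def
    using prob_unit prob_space_imp_sigma_finite by blast
  have "(\<integral>x. (\<Prod>i<k. x i)^j \<partial>(Pi\<^sub>M {..<k} (\<lambda>_. restrict_space lborel {0..1::real})))
     = (\<integral>x. (\<Prod>i\<in>{..<k}. (\<lambda>i y. y^j) i (x i)) \<partial>(Pi\<^sub>M {..<k} (\<lambda>_. restrict_space lborel {0..1::real})))"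
    by (simp add: prod_power_distrib)
  also have "... = (\<Prod>i\<in>{..<k}. \<integral>y. y^j \<partial>restrict_space lborel {0..1::real})"
  proof (rule product_integral_prod)
    show "integrable (restrict_space lborel {0..1::real}) (\<lambda>y. y^j)" for i
    proof -
      interpret prob_space "restrict_space lborel {0..1::real}" by (rule prob_unit)
      have m: "(\<lambda>y. y^j) \<in> borel_measurable (restrict_space lborel {0..1::real})"
        by (intro measurable_restrict_space1) simp
      have b: "norm (y^j) \<le> (1::real)" if "y \<in> space (restrict_space lborel {0..1::real})" for y
        using that by (auto simp: space_restrict_space abs_of_nonneg power_le_one_iff)
      show ?thesis
        by (rule integrable_const_bound[where B=1, OF AE_I2[OF b] m])
    qed
  qed simp
  also have "... = (1 / (real j + 1))^k" by (simp add: int_pow)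
  finally show ?thesis .
qed


lemma aa_gchoose: "aa y n = (-4)^n * (fact n)^2 * (((y/2) gchoose n) * ((-y/2) gchoose n))"
proof -
  have g1: "(y/2 gchoose n) = (\<Prod>i<n. y/2 - real i) / fact n"
    by (simp add: gbinomial_prod_rev atLeast0LessThan)
  have g2: "((-y/2) gchoose n) = (\<Prod>i<n. -y/2 - real i) / fact n"
    by (simp add: gbinomial_prod_rev atLeast0LessThan)
  have f: "(fact n :: real) \<noteq> 0" by simp
  have "(-4)^n * (fact n)^2 * (((y/2) gchoose n) * ((-y/2) gchoose n))
      = (-4)^n * ((\<Prod>i<n. y/2 - real i) * (\<Prod>i<n. -y/2 - real i))"
    unfolding g1 g2 using f by (simp add: power2_eq_square)
  also have "... = (\<Prod>i<n. (-4) * ((y/2 - real i) * (-y/2 - real i)))"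
    by (simp only: prod.distrib prod_constant card_lessThan)
  also have "... = aa y n" unfolding aa_def
    by (rule prod.cong) (simp_all add: algebra_simps power2_eq_square)
  finally show ?thesis ..
qed

lemma main_sums:
  assumes t: "\<bar>t\<bar> < 1/2"
  shows "(\<lambda>n. (\<integral>x. aa (\<Prod>i<k. x i) n \<partial>(Pi\<^sub>M {..<k} (\<lambda>_. restrict_space lborel {0..1::real})))
           * t^(2*n) / fact (2*n)) sums Lif2 (int k) (arsinh t)"
proof -
  define MM where "MM = Pi\<^sub>M {..<k} (\<lambda>_. restrict_space lborel {0..1::real})"
  define X where "X x = (\<Prod>i<k. x i)" for x :: "nat \<Rightarrow> real"
  define s where "s = arsinh t"
  have P: "prob_space MM" unfolding MM_def by (rule prob_cube)
  have X01: "X x \<in> {0..1}" if "x \<in> space MM" for x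
    using that space_cube unfolding MM_def X_def by blast
  have mX[measurable]: "X \<in> borel_measurable MM"
    unfolding MM_def X_def[abs_def] by (rule meas_X)
  have int_cosh: "(\<integral>x. cosh (X x * s) \<partial>MM) = (\<integral>x. cosh (X x * s) \<partial>MM)" ..
  define F where "F n x = aa (X x) n * t^(2*n) / fact (2*n)" for n x
  have F1: "(\<lambda>n. \<integral>x. F n x \<partial>MM) sums (\<integral>x. (\<Sum>n. F n x) \<partial>MM)"
  proof (rule sums_integral_bounded[OF P, where b = "\<lambda>n. (t^2)^n"])
    show "F n \<in> borel_measurable MM" for n
      unfolding F_def[abs_def] aa_def by measurable
    show "\<bar>F n x\<bar> \<le> (t^2)^n" if "x \<in> space MM" for n x
    proof -
      have "\<bar>X x\<bar> \<le> 1" using X01[OF that] by auto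
      from aa_bound[OF this, of n]
      have "\<bar>aa (X x) n\<bar> / fact (2*n) \<le> 1" by simp
      then have "\<bar>aa (X x) n\<bar> / fact (2*n) * \<bar>t\<bar>^(2*n) \<le> \<bar>t\<bar>^(2*n)"
        by (intro mult_left_le_one_le) auto
      then show ?thesis
        by (simp add: F_def abs_mult abs_divide power_mult power_abs)
    qed
    show "summable (\<lambda>n. (t^2)^n)"
      using t by (intro summable_geometric) (simp add: abs_square_less_1)
  qed
  have F2: "(\<integral>x. (\<Sum>n. F n x) \<partial>MM) = (\<integral>x. cosh (X x * s) \<partial>MM)"
  proof (rule Bochner_Integration.integral_cong[OF refl])
    fix x assume "x \<in> space MM"
    then have "\<bar>X x\<bar> \<le> 1" using X01 by auto
    from aa_sums[OF this t] show "(\<Sum>n. F n x) = cosh (X x * s)"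
      unfolding F_def s_def by (rule sums_unique[symmetric])
  qed
  have F3: "(\<integral>x. F n x \<partial>MM) = (\<integral>x. aa (X x) n \<partial>MM) * t^(2*n) / fact (2*n)" for n
    unfolding F_def by simp
  define G where "G m x = (X x * s)^(2*m) / fact (2*m)" for m x
  have G1: "(\<lambda>m. \<integral>x. G m x \<partial>MM) sums (\<integral>x. (\<Sum>m. G m x) \<partial>MM)"
  proof (rule sums_integral_bounded[OF P, where b = "\<lambda>m. s^(2*m) / fact (2*m)"])
    show "G n \<in> borel_measurable MM" for n
      unfolding G_def[abs_def] by measurable
    show "\<bar>G n x\<bar> \<le> s^(2*n) / fact (2*n)" if "x \<in> space MM" for n x
    proof -
      have x: "\<bar>X x\<bar> \<le> 1" using X01[OF that] by auto
      have "\<bar>X x * s\<bar>^(2*n) \<le> \<bar>s\<bar>^(2*n)"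
        using x by (intro power_mono) (auto simp: abs_mult intro: mult_left_le_one_le)
      then show ?thesis
        by (simp add: G_def abs_divide power_abs power_even_abs divide_right_mono)
    qed
    show "summable (\<lambda>m. s^(2*m) / fact (2*m))"
      using cosh_sums[of s] by (simp add: sums_iff)
  qed
  have G2: "(\<integral>x. (\<Sum>m. G m x) \<partial>MM) = (\<integral>x. cosh (X x * s) \<partial>MM)"
  proof (rule Bochner_Integration.integral_cong[OF refl])
    fix x
    show "(\<Sum>m. G m x) = cosh (X x * s)"
      unfolding G_def by (rule sums_unique[symmetric, OF cosh_sums])
  qed
  have G3: "(\<integral>x. G m x \<partial>MM) = s^(2*m) / (fact (2*m) * (of_nat (2*m+1)) powi (int k))" for m
  proof -
    have "(\<integral>x. G m x \<partial>MM) = (\<integral>x. (X x)^(2*m) \<partial>MM) * s^(2*m) / fact (2*m)"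
      unfolding G_def by (simp add: power_mult_distrib)
    also have "(\<integral>x. (X x)^(2*m) \<partial>MM) = (1 / (real (2*m) + 1))^k"
      unfolding MM_def X_def by (rule int_Xpow)
    finally show ?thesis by (simp add: power_int_of_nat field_simps)
  qed
  have L: "Lif2 (int k) s = (\<integral>x. cosh (X x * s) \<partial>MM)"
  proof -
    have "(\<lambda>m. s^(2*m) / (fact (2*m) * (of_nat (2*m+1)) powi (int k))) sums (\<integral>x. cosh (X x * s) \<partial>MM)"
      using G1 unfolding G2 G3 .
    then show ?thesis unfolding Lif2_def by (rule sums_unique[symmetric])
  qed
  have e: "(\<lambda>n. \<integral>x. F n x \<partial>MM) = (\<lambda>n. (\<integral>x. aa (X x) n \<partial>MM) * t^(2*n) / fact (2*n))"
    by (rule ext) (rule F3)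
  from F1[unfolded e F2 L[symmetric]] show ?thesis unfolding s_def MM_def X_def .
qed


theorem corollary1:
  fixes n :: nat and k :: nat
  assumes "k \<ge> 1"
  shows "polyCauchy2 (int k) (2*n) =
    (-4) ^ n * (fact n) ^ 2 *
    (\<integral>x. (((\<Prod>i<k. x i) / 2) gchoose n) * ((- (\<Prod>i<k. x i) / 2) gchoose n)
        \<partial>(Pi\<^sub>M {..<k} (\<lambda>_. restrict_space lborel {0..1::real})))"
proof -
  define MM where "MM = Pi\<^sub>M {..<k} (\<lambda>_. restrict_space lborel {0..1::real})"
  define c where "c m = (if even m then (\<integral>x. aa (\<Prod>i<k. x i) (m div 2) \<partial>MM) else 0)" for m
  have csum: "(\<lambda>m. c m * t^m / fact m) sums Lif2 (int k) (arsinh t)" if t: "\<bar>t\<bar> < 1/2" for t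
  proof -
    have "(\<lambda>n. c (2*n) * t^(2*n) / fact (2*n)) sums Lif2 (int k) (arsinh t)"
      using main_sums[OF t, of k] by (simp add: c_def MM_def)
    then show ?thesis by (subst (asm) even_reindex) (auto simp: c_def)
  qed
  have "polyCauchy2 (int k) = c"
    unfolding polyCauchy2_def
  proof (rule the_equality)
    show "\<exists>r>0. \<forall>t::real. \<bar>t\<bar> < r \<longrightarrow> (\<lambda>n. c n * t ^ n / fact n) sums Lif2 (int k) (arsinh t)"
      using csum by (intro exI[of _ "1/2"]) auto
  next
    fix d assume "\<exists>r>0. \<forall>t::real. \<bar>t\<bar> < r \<longrightarrow> (\<lambda>n. d n * t ^ n / fact n) sums Lif2 (int k) (arsinh t)"
    then obtain r where r: "r > 0" and d: "\<And>t. \<bar>t\<bar> < r \<Longrightarrow> (\<lambda>n. d n * t ^ n / fact n) sums Lif2 (int k) (arsinh t)"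
      by blast
    show "d = c"
      by (rule powser_unique[of "min r (1/2)" d "\<lambda>t. Lif2 (int k) (arsinh t)"])
         (use r in \<open>auto intro: d csum\<close>)
  qed
  then have "polyCauchy2 (int k) (2*n) = (\<integral>x. aa (\<Prod>i<k. x i) n \<partial>MM)"
    by (simp add: c_def)
  also have "... = (\<integral>x. (-4) ^ n * (fact n) ^ 2 *
      ((((\<Prod>i<k. x i) / 2) gchoose n) * ((- (\<Prod>i<k. x i) / 2) gchoose n)) \<partial>MM)"
    by (simp only: aa_gchoose)
  also have "... = (-4) ^ n * (fact n) ^ 2 *
    (\<integral>x. (((\<Prod>i<k. x i) / 2) gchoose n) * ((- (\<Prod>i<k. x i) / 2) gchoose n) \<partial>MM)"
    by (rule integral_mult_right_zero)
  finally show ?thesis unfolding MM_def .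
qed

end
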